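(* Consider the problem $$\text{(P)}\qquad \max_{\beta\in X}\ R(\beta)=\frac1n\sum_{i=1}^n r(w^i\cdot\beta;\,b_i^{(1)},b_i^{(2)})$$ and the problem $$\text{(G)}\qquad \max_{\beta,v,y}\ \frac1n\sum_{i=1}^n y_i\quad\text{s.t. } v_i=w^i\cdot\beta\ (i=1,\dots,n),\ \ (v_i,y_i)\in\operatorname{cl}\big(\mathrm{gr}(r(\cdot;b_i^{(1)},b_i^{(2)});[l_i,u_i])\big)\ (i=1,\dots,n),\ \ \beta\in X.$$ If $(\beta,v,y)$ is an optimal solution of (G), then $\beta$ is an optimal solution of (P). Conversely, if $\beta$ is an optimal solution of (P), then there exist $v\in\mathbb{R}^n$, $y\in\mathbb{R}^n$ such that $(\beta,v,y)$ is an optimal solution of (G).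
   Context: For bids $b^{(1)}\ge b^{(2)}\ge 0$ the reward function is $r(v;b^{(1)},b^{(2)})=b^{(2)}$ if $v\le b^{(2)}$, $=v$ if $b^{(2)}<v\le b^{(1)}$, and $=0$ if $v>b^{(1)}$. Data: $w^i\in\mathbb{R}^d$ and $b_i^{(1)}\ge b_i^{(2)}\ge0$ for $i=1,\dots,n$, and $X=[L,U]^d$. For a set $D\subseteq\mathbb{R}$, $\mathrm{gr}(r(\cdot;b^{(1)},b^{(2)});D)=\{(v,y): v\in D,\ y=r(v;b^{(1)},b^{(2)})\}$, and $\operatorname{cl}$ denotes topological closure in $\mathbb{R}^2$. The bounds are $l_i=\min_{\beta\in X}w^i\cdot\beta$ and $u_i=\max_{\beta\in X}w^i\cdot\beta$. *)

theory Defs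
  imports "HOL-Analysis.Analysis"
begin

definition reward :: "real \<Rightarrow> real \<Rightarrow> real \<Rightarrow> real" where
  "reward v b1 b2 = (if v \<le> b2 then b2 else if v \<le> b1 then v else 0)"

definition gr :: "(real \<Rightarrow> real) \<Rightarrow> real set \<Rightarrow> (real \<times> real) set" where
  "gr f D = {(v, y). v \<in> D \<and> y = f v}"

definition boxX :: "real \<Rightarrow> real \<Rightarrow> (real^'d) set" where
  "boxX L U = {\<beta>. \<forall>j. L \<le> \<beta> $ j \<and> \<beta> $ j \<le> U}"

text \<open>l_i = min (= inf, attained by compactness) over X of w.beta, u_i = max over X of w.beta.\<close>
definition lbnd :: "real \<Rightarrow> real \<Rightarrow> real^'d \<Rightarrow> real" where
  "lbnd L U w = Inf ((\<lambda>\<beta>. w \<bullet> \<beta>) ` boxX L U)"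

definition ubnd :: "real \<Rightarrow> real \<Rightarrow> real^'d \<Rightarrow> real" where
  "ubnd L U w = Sup ((\<lambda>\<beta>. w \<bullet> \<beta>) ` boxX L U)"

definition Robj :: "nat \<Rightarrow> (nat \<Rightarrow> real^'d) \<Rightarrow> (nat \<Rightarrow> real) \<Rightarrow> (nat \<Rightarrow> real) \<Rightarrow> real^'d \<Rightarrow> real" where
  "Robj n w b1 b2 \<beta> = (1 / real n) * (\<Sum>i<n. reward (w i \<bullet> \<beta>) (b1 i) (b2 i))"

definition optP :: "nat \<Rightarrow> (nat \<Rightarrow> real^'d) \<Rightarrow> (nat \<Rightarrow> real) \<Rightarrow> (nat \<Rightarrow> real) \<Rightarrow> real \<Rightarrow> real \<Rightarrow> real^'d \<Rightarrow> bool" where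
  "optP n w b1 b2 L U \<beta> \<longleftrightarrow> \<beta> \<in> boxX L U \<and>
     (\<forall>\<beta>'\<in>boxX L U. Robj n w b1 b2 \<beta>' \<le> Robj n w b1 b2 \<beta>)"

text \<open>Feasibility and optimality for (G); v, y are vectors indexed by i < n.\<close>
definition feasG :: "nat \<Rightarrow> (nat \<Rightarrow> real^'d) \<Rightarrow> (nat \<Rightarrow> real) \<Rightarrow> (nat \<Rightarrow> real) \<Rightarrow> real \<Rightarrow> real \<Rightarrow>
    real^'d \<Rightarrow> (nat \<Rightarrow> real) \<Rightarrow> (nat \<Rightarrow> real) \<Rightarrow> bool" where
  "feasG n w b1 b2 L U \<beta> v y \<longleftrightarrow> \<beta> \<in> boxX L U \<and>
     (\<forall>i<n. v i = w i \<bullet> \<beta> \<and>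
        (v i, y i) \<in> closure (gr (\<lambda>t. reward t (b1 i) (b2 i)) {lbnd L U (w i) .. ubnd L U (w i)}))"

definition Gobj :: "nat \<Rightarrow> (nat \<Rightarrow> real) \<Rightarrow> real" where
  "Gobj n y = (1 / real n) * (\<Sum>i<n. y i)"

definition optG :: "nat \<Rightarrow> (nat \<Rightarrow> real^'d) \<Rightarrow> (nat \<Rightarrow> real) \<Rightarrow> (nat \<Rightarrow> real) \<Rightarrow> real \<Rightarrow> real \<Rightarrow>
    real^'d \<Rightarrow> (nat \<Rightarrow> real) \<Rightarrow> (nat \<Rightarrow> real) \<Rightarrow> bool" where
  "optG n w b1 b2 L U \<beta> v y \<longleftrightarrow> feasG n w b1 b2 L U \<beta> v y \<and>
     (\<forall>\<beta>' v' y'. feasG n w b1 b2 L U \<beta>' v' y' \<longrightarrow> Gobj n y' \<le> Gobj n y)"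

end

theory Submission
  imports Defs
begin

lemma closed_S:
  "closed {p::real\<times>real. (fst p \<le> b2 \<and> snd p \<le> b2) \<or> (b2 \<le> fst p \<and> fst p \<le> b1 \<and> snd p \<le> fst p) \<or> (b1 \<le> fst p \<and> snd p \<le> 0)}"
  by (intro closed_Collect_disj closed_Collect_conj closed_Collect_le continuous_intros)

lemma clos_le:
  assumes "b2 \<le> b1" "0 \<le> b2" "(v, y) \<in> closure (gr (\<lambda>t. reward t b1 b2) D)"
  shows "y \<le> reward v b1 b2"
proof -
  let ?S = "{p::real\<times>real. (fst p \<le> b2 \<and> snd p \<le> b2) \<or> (b2 \<le> fst p \<and> fst p \<le> b1 \<and> snd p \<le> fst p) \<or> (b1 \<le> fst p \<and> snd p \<le> 0)}"
  have "gr (\<lambda>t. reward t b1 b2) D \<subseteq> ?S"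
    using assms(1,2) unfolding gr_def reward_def by (auto split: if_splits)
  hence "closure (gr (\<lambda>t. reward t b1 b2) D) \<subseteq> ?S"
    using closed_S closure_minimal by blast
  with assms(3) have "(v,y) \<in> ?S" by blast
  thus ?thesis using assms(1,2) unfolding reward_def by auto
qed

lemma box_bounds:
  fixes \<beta> :: "real^'d"
  assumes "\<beta> \<in> boxX L U"
  shows "lbnd L U w \<le> w \<bullet> \<beta> \<and> w \<bullet> \<beta> \<le> ubnd L U (w::real^'d)"
proof -
  have "boxX L U = cbox ((\<chi> j. L)::real^'d) (\<chi> j. U)"
    unfolding boxX_def by (auto simp: mem_box_cart)
  hence "compact (boxX L U :: (real^'d) set)" using compact_cbox by metis
  hence "compact ((\<lambda>\<beta>. w \<bullet> \<beta>) ` boxX L U)"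
    by (intro compact_continuous_image continuous_intros)
  hence b: "bounded ((\<lambda>\<beta>. w \<bullet> \<beta>) ` boxX L U)" by (rule compact_imp_bounded)
  have m: "w \<bullet> \<beta> \<in> (\<lambda>\<beta>. w \<bullet> \<beta>) ` boxX L U" using assms by blast
  show ?thesis unfolding lbnd_def ubnd_def
    using cInf_lower[OF m bounded_imp_bdd_below[OF b]] cSup_upper[OF m bounded_imp_bdd_above[OF b]]
    by simp
qed

lemma feas_le:
  assumes "\<And>i. i < n \<Longrightarrow> b1 i \<ge> b2 i \<and> b2 i \<ge> 0"
    and "feasG n w b1 b2 L U \<beta> v y"
  shows "Gobj n y \<le> Robj n w b1 b2 \<beta>"
proof -
  have "\<forall>i<n. y i \<le> reward (w i \<bullet> \<beta>) (b1 i) (b2 i)"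
    using assms clos_le unfolding feasG_def by metis
  hence "(\<Sum>i<n. y i) \<le> (\<Sum>i<n. reward (w i \<bullet> \<beta>) (b1 i) (b2 i))"
    by (intro sum_mono) auto
  thus ?thesis unfolding Gobj_def Robj_def
    by (intro mult_left_mono) auto
qed

lemma feas_R:
  assumes "\<beta> \<in> boxX L U"
  shows "feasG n w b1 b2 L U \<beta> (\<lambda>i. w i \<bullet> \<beta>) (\<lambda>i. reward (w i \<bullet> \<beta>) (b1 i) (b2 i))
         \<and> Gobj n (\<lambda>i. reward (w i \<bullet> \<beta>) (b1 i) (b2 i)) = Robj n w b1 b2 \<beta>"
proof -
  have "\<forall>i<n. (w i \<bullet> \<beta>, reward (w i \<bullet> \<beta>) (b1 i) (b2 i))
     \<in> closure (gr (\<lambda>t. reward t (b1 i) (b2 i)) {lbnd L U (w i) .. ubnd L U (w i)})"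
  proof (intro allI impI)
    fix i
    have "(w i \<bullet> \<beta>, reward (w i \<bullet> \<beta>) (b1 i) (b2 i))
     \<in> gr (\<lambda>t. reward t (b1 i) (b2 i)) {lbnd L U (w i) .. ubnd L U (w i)}"
      using box_bounds[OF assms, of "w i"] unfolding gr_def by auto
    thus "(w i \<bullet> \<beta>, reward (w i \<bullet> \<beta>) (b1 i) (b2 i))
     \<in> closure (gr (\<lambda>t. reward t (b1 i) (b2 i)) {lbnd L U (w i) .. ubnd L U (w i)})"
      using closure_subset by blast
  qed
  thus ?thesis using assms unfolding feasG_def Gobj_def Robj_def by auto
qed

theorem proposition1:
  fixes n :: nat and w :: "nat \<Rightarrow> real^'d" and b1 b2 :: "nat \<Rightarrow> real" and L U :: real
  assumes "n \<ge> 1"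
    and "\<And>i. i < n \<Longrightarrow> b1 i \<ge> b2 i \<and> b2 i \<ge> 0"
  shows "(\<forall>\<beta> v y. optG n w b1 b2 L U \<beta> v y \<longrightarrow> optP n w b1 b2 L U \<beta>) \<and>
         (\<forall>\<beta>. optP n w b1 b2 L U \<beta> \<longrightarrow> (\<exists>v y. optG n w b1 b2 L U \<beta> v y))"
proof (intro conjI allI impI)
  fix \<beta> :: "real^'d" and v y assume o: "optG n w b1 b2 L U \<beta> v y"
  hence f: "feasG n w b1 b2 L U \<beta> v y" and bx: "\<beta> \<in> boxX L U"
    unfolding optG_def feasG_def by auto
  have "\<forall>\<beta>'\<in>boxX L U. Robj n w b1 b2 \<beta>' \<le> Robj n w b1 b2 \<beta>"
  proof
    fix \<beta>' :: "real^'d" assume "\<beta>' \<in> boxX L U"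
    from feas_R[OF this]
    have "Robj n w b1 b2 \<beta>' \<le> Gobj n y" using o unfolding optG_def by metis
    also have "\<dots> \<le> Robj n w b1 b2 \<beta>" using feas_le[OF assms(2) f] .
    finally show "Robj n w b1 b2 \<beta>' \<le> Robj n w b1 b2 \<beta>" .
  qed
  thus "optP n w b1 b2 L U \<beta>" using bx unfolding optP_def by auto
next
  fix \<beta> :: "real^'d" assume o: "optP n w b1 b2 L U \<beta>"
  hence bx: "\<beta> \<in> boxX L U" unfolding optP_def by auto
  have "optG n w b1 b2 L U \<beta> (\<lambda>i. w i \<bullet> \<beta>) (\<lambda>i. reward (w i \<bullet> \<beta>) (b1 i) (b2 i))"
    unfolding optG_def
  proof (intro conjI allI impI)
    show "feasG n w b1 b2 L U \<beta> (\<lambda>i. w i \<bullet> \<beta>) (\<lambda>i. reward (w i \<bullet> \<beta>) (b1 i) (b2 i))"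
      using feas_R[OF bx] by blast
    fix \<beta>' :: "real^'d" and v' y' assume f: "feasG n w b1 b2 L U \<beta>' v' y'"
    hence "\<beta>' \<in> boxX L U" unfolding feasG_def by auto
    have "Gobj n y' \<le> Robj n w b1 b2 \<beta>'" using feas_le[OF assms(2) f] .
    also have "\<dots> \<le> Robj n w b1 b2 \<beta>" using o \<open>\<beta>' \<in> boxX L U\<close> unfolding optP_def by auto
    also have "\<dots> = Gobj n (\<lambda>i. reward (w i \<bullet> \<beta>) (b1 i) (b2 i))" using feas_R[OF bx] by metis
    finally show "Gobj n y' \<le> Gobj n (\<lambda>i. reward (w i \<bullet> \<beta>) (b1 i) (b2 i))" .
  qed
  thus "\<exists>v y. optG n w b1 b2 L U \<beta> v y" by blast
qed

end
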